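(* Let $\delta>1$, $\gamma>0$, $0<A_u<A_s$ and $0<\rho_u<\rho_s$. For $L>0$ define \[ s^*(L)=\left[\gamma^{-\delta}A_s^{\delta-1}L\right]^{\frac{1}{1+\delta\rho_s}},\qquad u^*(L)=\left[\gamma^{-\delta}A_u^{\delta-1}L\right]^{\frac{1}{1+\delta\rho_u}}. \] Then \[ \frac{\partial}{\partial L}\left[\frac{s^*(L)}{u^*(L)}\right]<0\quad\text{for all }L>0, \] i.e. an increase in the demand for legal services tilts the composition of employed legal workers towards unskilled workers.
   Context: Model of the legal labor market: skilled ($s$) and unskilled ($u$) workers supply labor $j=(w_j/\gamma)^{1/\rho_j}$, where $1/\rho_j$ is the Frisch elasticity of labor supply of type $j$; a competitive firm produces legal services $L=\left[(A_u u)^{\frac{\delta-1}{\delta}}+(A_s s)^{\frac{\delta-1}{\delta}}\right]^{\frac{\delta}{\delta-1}}$ paying marginal products $w_j=A_j^{\frac{\delta-1}{\delta}}(L/j)^{1/\delta}$, with $L>0$ treated as an exogenous demand parameter. $s^*(L),u^*(L)$ are the resulting equilibrium employment levels. The hypotheses $\rho_u<\rho_s$ (skilled labor supply less elastic) and $A_u<A_s$ (skilled labor more productive) are the paper's standing assumptions. *)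

theory Defs
  imports Complex_Main
begin

definition s_star :: "real \<Rightarrow> real \<Rightarrow> real \<Rightarrow> real \<Rightarrow> real \<Rightarrow> real" where
  "s_star \<delta> \<gamma> A_s \<rho>_s L = (\<gamma> powr (-\<delta>) * A_s powr (\<delta> - 1) * L) powr (1 / (1 + \<delta> * \<rho>_s))"

definition u_star :: "real \<Rightarrow> real \<Rightarrow> real \<Rightarrow> real \<Rightarrow> real \<Rightarrow> real" where
  "u_star \<delta> \<gamma> A_u \<rho>_u L = (\<gamma> powr (-\<delta>) * A_u powr (\<delta> - 1) * L) powr (1 / (1 + \<delta> * \<rho>_u))"

end

theory Submission
  imports Defs
begin

theorem proposition1:
  fixes \<delta> \<gamma> A_u A_s \<rho>_u \<rho>_s :: real
  assumes "\<delta> > 1" and "\<gamma> > 0" and "0 < A_u" and "A_u < A_s"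
    and "0 < \<rho>_u" and "\<rho>_u < \<rho>_s"
  shows "\<forall>L > 0. \<exists>D. ((\<lambda>L. s_star \<delta> \<gamma> A_s \<rho>_s L / u_star \<delta> \<gamma> A_u \<rho>_u L)
            has_real_derivative D) (at L) \<and> D < 0"
proof (intro allI impI)
  fix L :: real assume L: "L > 0"
  define a where "a = \<gamma> powr (-\<delta>) * A_s powr (\<delta> - 1)"
  define b where "b = \<gamma> powr (-\<delta>) * A_u powr (\<delta> - 1)"
  define p where "p = 1 / (1 + \<delta> * \<rho>_s)"
  define q where "q = 1 / (1 + \<delta> * \<rho>_u)"
  define C where "C = a powr p / b powr q"
  have a: "a > 0" unfolding a_def using assms by simp
  have b: "b > 0" unfolding b_def using assms by simp
  have C: "C > 0" unfolding C_def using a b by simp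
  have d1: "1 + \<delta> * \<rho>_u > 0" using assms by (simp add: add_pos_pos)
  have "\<delta> * \<rho>_u < \<delta> * \<rho>_s" using assms by simp
  hence pq: "p < q" unfolding p_def q_def using d1
    by (simp add: frac_less2)
  have eq: "s_star \<delta> \<gamma> A_s \<rho>_s x / u_star \<delta> \<gamma> A_u \<rho>_u x = C * x powr (p - q)"
    if "x \<in> {0<..}" for x
  proof -
    have x: "x > 0" using that by simp
    have "s_star \<delta> \<gamma> A_s \<rho>_s x = a powr p * x powr p"
      unfolding s_star_def a_def p_def using x a_def a by (simp add: powr_mult)
    moreover have "u_star \<delta> \<gamma> A_u \<rho>_u x = b powr q * x powr q"
      unfolding u_star_def b_def q_def using x b_def b by (simp add: powr_mult)
    ultimately show ?thesis unfolding C_def using x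
      by (simp add: powr_diff)
  qed
  have "((\<lambda>x. C * x powr (p - q)) has_real_derivative C * ((p - q) * L powr (p - q - 1))) (at L)"
    by (intro DERIV_cmult has_real_derivative_powr L)
  hence "((\<lambda>L. s_star \<delta> \<gamma> A_s \<rho>_s L / u_star \<delta> \<gamma> A_u \<rho>_u L)
            has_real_derivative C * ((p - q) * L powr (p - q - 1))) (at L)"
    by (rule has_field_derivative_transform_within_open[where S="{0<..}"])
       (use L eq in auto)
  moreover have "C * ((p - q) * L powr (p - q - 1)) < 0"
  proof -
    have "(p - q) * L powr (p - q - 1) < 0" using pq L by (simp add: mult_neg_pos)
    thus ?thesis using C by (simp add: mult_pos_neg)
  qed
  ultimately show "\<exists>D. ((\<lambda>L. s_star \<delta> \<gamma> A_s \<rho>_s L / u_star \<delta> \<gamma> A_u \<rho>_u L)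
            has_real_derivative D) (at L) \<and> D < 0" by blast
qed

end
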